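(* Let $G$ be a compact Hausdorff group and suppose an element $g\in G$ has a countable Engel sink $\{s_1,s_2,\dots\}$. Then there are positive integers $i,j$ and a nonempty open set $U\subseteq G$ such that $[u,{}_i g]=s_j$ for all $u\in U$. If in addition $G$ is profinite, then there are positive integers $i,j$ and a coset $Nb$ of an open normal subgroup $N$ of $G$ such that $[nb,{}_i g]=s_j$ for all $n\in N$.
   Context: Commutators are left-normed, $[a,b]=a^{-1}b^{-1}ab$, and $[x,{}_n g]=[x,g,\dots,g]$ with $g$ repeated $n$ times. An Engel sink of an element $g$ of a group $G$ is a set $\mathscr E(g)\subseteq G$ such that for every $x\in G$ there is a positive integer $n(x,g)$ with $[x,{}_n g]\in\mathscr E(g)$ for all $n\ge n(x,g)$. "Countable" means finite or denumerable. *)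

theory Defs
  imports "HOL-Analysis.Analysis" "HOL-Algebra.Coset"
begin

definition comm :: "('a, 'b) monoid_scheme \<Rightarrow> 'a \<Rightarrow> 'a \<Rightarrow> 'a" where
  "comm G a b = inv\<^bsub>G\<^esub> a \<otimes>\<^bsub>G\<^esub> inv\<^bsub>G\<^esub> b \<otimes>\<^bsub>G\<^esub> a \<otimes>\<^bsub>G\<^esub> b"

primrec engel_comm :: "('a, 'b) monoid_scheme \<Rightarrow> 'a \<Rightarrow> nat \<Rightarrow> 'a \<Rightarrow> 'a" where
  "engel_comm G x 0 g = x"
| "engel_comm G x (Suc n) g = comm G (engel_comm G x n g) g"

definition engel_sink :: "('a, 'b) monoid_scheme \<Rightarrow> 'a \<Rightarrow> 'a set \<Rightarrow> bool" where
  "engel_sink G g E \<longleftrightarrow> E \<subseteq> carrier G \<and>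
     (\<forall>x\<in>carrier G. \<exists>n>0. \<forall>m\<ge>n. engel_comm G x m g \<in> E)"

definition topological_group :: "('a, 'b) monoid_scheme \<Rightarrow> 'a topology \<Rightarrow> bool" where
  "topological_group G T \<longleftrightarrow> group G \<and> topspace T = carrier G \<and>
     continuous_map (prod_topology T T) T (\<lambda>(x, y). x \<otimes>\<^bsub>G\<^esub> y) \<and>
     continuous_map T T (\<lambda>x. inv\<^bsub>G\<^esub> x)"

definition totally_disconnected_space :: "'a topology \<Rightarrow> bool" where
  "totally_disconnected_space T \<longleftrightarrow>
     (\<forall>S. connectedin T S \<longrightarrow> (\<forall>x\<in>S. \<forall>y\<in>S. x = y))"

definition profinite_group :: "('a, 'b) monoid_scheme \<Rightarrow> 'a topology \<Rightarrow> bool" where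
  "profinite_group G T \<longleftrightarrow> topological_group G T \<and> compact_space T \<and>
     Hausdorff_space T \<and> totally_disconnected_space T"

end

theory Submission
  imports Defs
begin

lemma tg_mult_cont:
  assumes "topological_group G T" "continuous_map X T f" "continuous_map X T h"
  shows "continuous_map X T (\<lambda>x. f x \<otimes>\<^bsub>G\<^esub> h x)"
proof -
  have 1: "continuous_map X (prod_topology T T) (\<lambda>x. (f x, h x))"
    using assms by (intro continuous_map_pairedI)
  have 2: "continuous_map (prod_topology T T) T (\<lambda>(x, y). x \<otimes>\<^bsub>G\<^esub> y)"
    using assms(1) unfolding topological_group_def by blast
  show ?thesis using continuous_map_compose[OF 1 2] by (simp add: o_def)
qed

lemma tg_inv_cont:
  assumes "topological_group G T" "continuous_map X T f"
  shows "continuous_map X T (\<lambda>x. inv\<^bsub>G\<^esub> (f x))"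
proof -
  have 2: "continuous_map T T (\<lambda>x. inv\<^bsub>G\<^esub> x)"
    using assms(1) unfolding topological_group_def by blast
  show ?thesis using continuous_map_compose[OF assms(2) 2] by (simp add: o_def)
qed

lemma tg_engel_cont:
  assumes "topological_group G T" "g \<in> carrier G"
  shows "continuous_map T T (\<lambda>x. engel_comm G x n g)"
proof (induction n)
  case 0
  then show ?case by (simp add: continuous_map_id[unfolded id_def])
next
  case (Suc n)
  have gc: "continuous_map T T (\<lambda>x. g)"
    using assms unfolding topological_group_def by simp
  show ?case
    unfolding engel_comm.simps comm_def
    by (intro tg_mult_cont[OF assms(1)] tg_inv_cont[OF assms(1)] Suc gc)
qed

lemma clopen_nbhd:
  assumes "compact_space X" "Hausdorff_space X" "totally_disconnected_space X"
    and "openin X W" "x \<in> W"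
  shows "\<exists>C. closedin X C \<and> openin X C \<and> x \<in> C \<and> C \<subseteq> W"
proof -
  have xt: "x \<in> topspace X" using assms openin_subset by blast
  define Q where "Q = quasi_component_of_set X x"
  have Qq: "Q \<in> quasi_components_of X"
    unfolding Q_def quasi_components_of_def using xt by blast
  have "closedin X Q" unfolding Q_def by (rule closedin_quasi_component_of)
  then have Qc: "compactin X Q" using assms(1) closedin_compact_space by blast
  have "Q \<in> connected_components_of X"
    using compact_quasi_eq_connected_components_of[OF compact_imp_locally_compact_space[OF assms(1)] assms(2) Qc] Qq
    by blast
  then have "connectedin X Q" by (rule connectedin_connected_components_of)
  then have Qs: "\<forall>a\<in>Q. \<forall>b\<in>Q. a = b" using assms(3) unfolding totally_disconnected_space_def by blast
  have xQ: "x \<in> Q" unfolding Q_def using xt by simp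
  have Q1: "Q = {x}" using Qs xQ by blast
  define K where "K = topspace X - W"
  have "closedin X K" unfolding K_def using assms(4) by blast
  then have Kc: "compactin X K" using assms(1) closedin_compact_space by blast
  have "disjnt Q K" using Q1 assms(5) unfolding K_def disjnt_def by blast
  then have "separated_between X Q K"
    using separated_between_quasi_component_compact[OF Qq Kc] by blast
  then obtain U V where UV: "openin X U" "openin X V" "U \<union> V = topspace X" "disjnt U V" "Q \<subseteq> U" "K \<subseteq> V"
    unfolding separated_between_def by blast
  have "U = topspace X - V" using UV unfolding disjnt_def by blast
  then have "closedin X U" using UV by blast
  moreover have "U \<subseteq> W" using UV unfolding K_def disjnt_def by blast
  ultimately show ?thesis using UV Q1 by blast
qed

lemma (in group) cancel_l:
  "\<lbrakk>x \<in> carrier G; y \<in> carrier G\<rbrakk> \<Longrightarrow> inv x \<otimes> (x \<otimes> y) = y"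
  by (simp add: m_assoc [symmetric])

lemma (in group) alg_A:
  "\<lbrakk>c \<in> carrier G; h \<in> carrier G; x \<in> carrier G\<rbrakk> \<Longrightarrow>
    (c \<otimes> (h \<otimes> inv x \<otimes> inv h)) \<otimes> (h \<otimes> x \<otimes> inv h) = c"
  by (simp add: m_assoc cancel_l)

lemma (in group) alg_B:
  "\<lbrakk>c \<in> carrier G; h \<in> carrier G; x \<in> carrier G; y \<in> carrier G\<rbrakk> \<Longrightarrow>
    c \<otimes> (h \<otimes> (x \<otimes> y) \<otimes> inv h) = (c \<otimes> (h \<otimes> x \<otimes> inv h)) \<otimes> (h \<otimes> y \<otimes> inv h)"
  by (simp add: m_assoc cancel_l)

lemma (in group) alg_C:
  "\<lbrakk>a \<in> carrier G; h \<in> carrier G; n \<in> carrier G\<rbrakk> \<Longrightarrow>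
    h \<otimes> (a \<otimes> n \<otimes> inv a) \<otimes> inv h = (h \<otimes> a) \<otimes> n \<otimes> inv (h \<otimes> a)"
  by (simp add: m_assoc inv_mult_group)

lemma (in group) alg_D:
  "\<lbrakk>c \<in> carrier G; h \<in> carrier G\<rbrakk> \<Longrightarrow> c \<otimes> (h \<otimes> \<one> \<otimes> inv h) = c"
  by (simp add: m_assoc)

lemma (in group) alg_E:
  "\<lbrakk>s \<in> carrier G; y \<in> carrier G\<rbrakk> \<Longrightarrow> s \<otimes> (inv s \<otimes> y) = y"
  by (simp add: m_assoc [symmetric])

theorem lemma2p6:
  fixes G :: "('a, 'b) monoid_scheme" and T :: "'a topology"
    and g :: 'a and s :: "nat \<Rightarrow> 'a"
  assumes "topological_group G T" and "compact_space T" and "Hausdorff_space T"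
    and "g \<in> carrier G"
    and "engel_sink G g (s ` {1..})"
  shows "(\<exists>i j U. i > 0 \<and> j > 0 \<and> openin T U \<and> U \<noteq> {} \<and>
            (\<forall>u\<in>U. engel_comm G u i g = s j))
       \<and> (profinite_group G T \<longrightarrow>
            (\<exists>i j N b. i > 0 \<and> j > 0 \<and> normal N G \<and> openin T N \<and> b \<in> carrier G \<and>
               (\<forall>n\<in>N. engel_comm G (n \<otimes>\<^bsub>G\<^esub> b) i g = s j)))"
proof -
  interpret group G using assms(1) unfolding topological_group_def by (rule conjunct1)
  have top: "topspace T = carrier G" using assms(1) unfolding topological_group_def by (simp only:)
  have sink1: "s ` {1..} \<subseteq> carrier G"
    using assms(5) unfolding engel_sink_def by (rule conjunct1)
  have sink2: "\<exists>n>0. \<forall>m\<ge>n. engel_comm G x m g \<in> s ` {1..}" if "x \<in> carrier G" for x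
    using assms(5) that unfolding engel_sink_def by blast
  define X where "X i j = {x \<in> topspace T. engel_comm G x i g \<in> {s j}}" for i j
  define \<G> where "\<G> = (\<lambda>(i,j). X i j) ` ({1::nat..} \<times> {1::nat..})"
  have cl: "closedin T (X i j)" if "j \<ge> 1" for i j
  proof -
    have "s j \<in> s ` {1..}" using that by simp
    then have "s j \<in> topspace T" using sink1 top by blast
    then have "closedin T {s j}" by (rule closedin_Hausdorff_singleton[OF assms(3)])
    then show ?thesis unfolding X_def
      by (rule closedin_continuous_map_preimage[OF tg_engel_cont[OF assms(1) assms(4)]])
  qed
  have clG: "closedin T Y" if "Y \<in> \<G>" for Y
    using that cl unfolding \<G>_def by auto
  have cnt: "countable \<G>" unfolding \<G>_def by (rule countable_image) (rule countableI_type)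
  have un: "\<Union>\<G> = topspace T"
  proof
    show "\<Union>\<G> \<subseteq> topspace T" unfolding \<G>_def X_def by auto
    show "topspace T \<subseteq> \<Union>\<G>"
    proof
      fix x assume x: "x \<in> topspace T"
      then obtain n where n: "n > 0" "\<forall>m\<ge>n. engel_comm G x m g \<in> s ` {1..}" using sink2 top by blast
      then have "engel_comm G x n g \<in> s ` {1..}" by blast
      then obtain j where j: "j \<in> {1..}" "engel_comm G x n g = s j" by (rule imageE)
      then have "x \<in> X n j" unfolding X_def using x by simp
      moreover have "X n j \<in> \<G>" unfolding \<G>_def
        using n j by (intro image_eqI[where x="(n,j)"]) auto
      ultimately show "x \<in> \<Union>\<G>" by blast
    qed
  qed
  have ne: "topspace T \<noteq> {}" using top one_closed by blast
  have "\<exists>Y\<in>\<G>. T interior_of Y \<noteq> {}"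
  proof (rule ccontr)
    assume "\<not> ?thesis"
    then have e: "\<And>Y. Y \<in> \<G> \<Longrightarrow> closedin T Y \<and> T interior_of Y = {}" using clG by blast
    have "T interior_of \<Union>\<G> = {}"
      using compact_imp_locally_compact_space[OF assms(2)]
        compact_Hausdorff_imp_regular_space[OF assms(2,3)]
      by (intro Baire_category_alt[OF _ cnt e]) blast
    then show False using un ne by simp
  qed
  then obtain Y where Y: "Y \<in> \<G>" "T interior_of Y \<noteq> {}" by blast
  then obtain p where p: "p \<in> {1::nat..} \<times> {1::nat..}" "Y = (\<lambda>(i,j). X i j) p"
    unfolding \<G>_def by blast
  obtain i j where pij: "p = (i,j)" by (cases p)
  have ij: "i \<ge> 1" "j \<ge> 1" "T interior_of X i j \<noteq> {}" using p Y pij by auto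
  define U where "U = T interior_of X i j"
  have Uo: "openin T U" unfolding U_def by simp
  have Us: "engel_comm G u i g = s j" if "u \<in> U" for u
  proof -
    have "u \<in> X i j" using interior_of_subset[of T "X i j"] that unfolding U_def by blast
    then show ?thesis unfolding X_def by simp
  qed
  have part1: "\<exists>i j U. i > 0 \<and> j > 0 \<and> openin T U \<and> U \<noteq> {} \<and>
            (\<forall>u\<in>U. engel_comm G u i g = s j)"
    apply (rule exI[where x=i], rule exI[where x=j], rule exI[where x=U])
    using ij Uo Us unfolding U_def by auto
  have part2: "\<exists>i j N b. i > 0 \<and> j > 0 \<and> normal N G \<and> openin T N \<and> b \<in> carrier G \<and>
               (\<forall>n\<in>N. engel_comm G (n \<otimes>\<^bsub>G\<^esub> b) i g = s j)"
    if pf: "profinite_group G T"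
  proof -
    have pfd: "totally_disconnected_space T" using pf unfolding profinite_group_def by simp
    obtain b where b: "b \<in> U" using ij(3) unfolding U_def by blast
    have Ut: "U \<subseteq> topspace T" by (rule openin_subset[OF Uo])
    have bc: "b \<in> carrier G" using b Ut top by blast
    define W where "W = {y \<in> topspace T. y \<otimes>\<^bsub>G\<^esub> b \<in> U}"
    have cid: "continuous_map T T (\<lambda>y. y)" using continuous_map_id[of T] by (simp add: id_def)
    have cb: "continuous_map T T (\<lambda>y. y \<otimes>\<^bsub>G\<^esub> b)"
      by (rule tg_mult_cont[OF assms(1) cid]) (simp add: top bc)
    have Wo: "openin T W" unfolding W_def by (rule openin_continuous_map_preimage[OF cb Uo])
    have oW: "\<one>\<^bsub>G\<^esub> \<in> W" unfolding W_def using b bc top by simp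
    have "\<exists>C. closedin T C \<and> openin T C \<and> \<one>\<^bsub>G\<^esub> \<in> C \<and> C \<subseteq> W"
      by (rule clopen_nbhd[OF assms(2,3) pfd Wo oW])
    then obtain C where C: "closedin T C" "openin T C" "\<one>\<^bsub>G\<^esub> \<in> C" "C \<subseteq> W" by blast
    have Ct: "C \<subseteq> carrier G" using C(2) openin_subset top by blast
    have Cco: "openin T (topspace T - C)" using C(1) unfolding closedin_def by (rule conjunct2)
    define P where "P = prod_topology (prod_topology T T) T"
    define f where "f = (\<lambda>p::('a \<times> 'a) \<times> 'a. fst (fst p) \<otimes>\<^bsub>G\<^esub> (snd (fst p) \<otimes>\<^bsub>G\<^esub> snd p \<otimes>\<^bsub>G\<^esub> inv\<^bsub>G\<^esub> (snd (fst p))))"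
    have c1: "continuous_map P T (\<lambda>p. fst (fst p))"
      unfolding P_def using continuous_map_compose[OF continuous_map_fst[of "prod_topology T T" T] continuous_map_fst[of T T]]
      by (simp add: o_def)
    have c2: "continuous_map P T (\<lambda>p. snd (fst p))"
      unfolding P_def using continuous_map_compose[OF continuous_map_fst[of "prod_topology T T" T] continuous_map_snd[of T T]]
      by (simp add: o_def)
    have c3: "continuous_map P T (\<lambda>p. snd p)"
      unfolding P_def using continuous_map_snd[of "prod_topology T T" T] by simp
    have fc: "continuous_map P T f"
      unfolding f_def
      by (intro tg_mult_cont[OF assms(1)] tg_inv_cont[OF assms(1)] c1 c2 c3)
    have tP: "topspace P = (carrier G \<times> carrier G) \<times> carrier G"
      unfolding P_def by (simp add: top)
    define E where "E = ({p \<in> topspace P. f p \<in> C} \<inter> {p \<in> topspace P. fst (fst p) \<in> C}) \<union>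
       ({p \<in> topspace P. f p \<in> topspace T - C} \<inter> {p \<in> topspace P. fst (fst p) \<in> topspace T - C})"
    have Eo: "openin P E" unfolding E_def
      by (intro openin_Un openin_Int openin_continuous_map_preimage[OF fc] 
          openin_continuous_map_preimage[OF c1] C(2) Cco)
    have Emem: "((c,h),y) \<in> E \<longleftrightarrow> (c \<otimes>\<^bsub>G\<^esub> (h \<otimes>\<^bsub>G\<^esub> y \<otimes>\<^bsub>G\<^esub> inv\<^bsub>G\<^esub> h) \<in> C \<longleftrightarrow> c \<in> C)"
      if "c \<in> carrier G" "h \<in> carrier G" "y \<in> carrier G" for c h y
      using that Ct unfolding E_def tP f_def by (auto simp: top)
    have sub: "topspace (prod_topology T T) \<times> {\<one>\<^bsub>G\<^esub>} \<subseteq> E"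
    proof
      fix q assume "q \<in> topspace (prod_topology T T) \<times> {\<one>\<^bsub>G\<^esub>}"
      then obtain c h where q: "q = ((c,h),\<one>\<^bsub>G\<^esub>)" "c \<in> carrier G" "h \<in> carrier G" by (auto simp: top)
      show "q \<in> E" unfolding q(1) using Emem[OF q(2,3) one_closed] alg_D[OF q(2,3)] by simp
    qed
    have "compact_space (prod_topology T T)" using assms(2) by (simp add: compact_space_prod_topology)
    then have cpt: "compactin (prod_topology T T) (topspace (prod_topology T T))"
      unfolding compact_space_def .
    have o1: "\<one>\<^bsub>G\<^esub> \<in> topspace T" using top by simp
    have "\<exists>U V. openin (prod_topology T T) U \<and> openin T V \<and> topspace (prod_topology T T) \<subseteq> U \<and> \<one>\<^bsub>G\<^esub> \<in> V \<and> U \<times> V \<subseteq> E"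
      by (rule tube_lemma_left[OF Eo[unfolded P_def] cpt o1 sub])
    then obtain U' V where tb: "openin T V" "topspace (prod_topology T T) \<subseteq> U'" "\<one>\<^bsub>G\<^esub> \<in> V" "U' \<times> V \<subseteq> E"
      by blast
    have Vc: "V \<subseteq> carrier G" using openin_subset[OF tb(1)] top by simp
    have VE: "c \<otimes>\<^bsub>G\<^esub> (h \<otimes>\<^bsub>G\<^esub> v \<otimes>\<^bsub>G\<^esub> inv\<^bsub>G\<^esub> h) \<in> C \<longleftrightarrow> c \<in> C"
      if "c \<in> carrier G" "h \<in> carrier G" "v \<in> V" for c h v
    proof -
      have "(c,h) \<in> U'" using tb(2) that by (auto simp add: top)
      then have "((c,h),v) \<in> E" using tb(4) that(3) by blast
      then show ?thesis using Emem that Vc by blast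
    qed
    define N where "N = {x \<in> carrier G. \<forall>c\<in>carrier G. \<forall>h\<in>carrier G. (c \<otimes>\<^bsub>G\<^esub> (h \<otimes>\<^bsub>G\<^esub> x \<otimes>\<^bsub>G\<^esub> inv\<^bsub>G\<^esub> h) \<in> C \<longleftrightarrow> c \<in> C)}"
    have VN: "V \<subseteq> N" unfolding N_def using VE Vc by blast
    have Nsg: "subgroup N G"
    proof (rule subgroupI)
      show "N \<subseteq> carrier G" unfolding N_def by blast
      show "N \<noteq> {}" using VN tb(3) by blast
    next
      fix a assume a: "a \<in> N"
      have ac: "a \<in> carrier G" using a unfolding N_def by blast
      show "inv\<^bsub>G\<^esub> a \<in> N" unfolding N_def
      proof (intro CollectI conjI ballI)
        fix c h assume ch: "c \<in> carrier G" "h \<in> carrier G"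
        have c': "c \<otimes>\<^bsub>G\<^esub> (h \<otimes>\<^bsub>G\<^esub> inv\<^bsub>G\<^esub> a \<otimes>\<^bsub>G\<^esub> inv\<^bsub>G\<^esub> h) \<in> carrier G" using ch ac by simp
        have "(c \<otimes>\<^bsub>G\<^esub> (h \<otimes>\<^bsub>G\<^esub> inv\<^bsub>G\<^esub> a \<otimes>\<^bsub>G\<^esub> inv\<^bsub>G\<^esub> h)) \<otimes>\<^bsub>G\<^esub> (h \<otimes>\<^bsub>G\<^esub> a \<otimes>\<^bsub>G\<^esub> inv\<^bsub>G\<^esub> h) \<in> C \<longleftrightarrow> c \<otimes>\<^bsub>G\<^esub> (h \<otimes>\<^bsub>G\<^esub> inv\<^bsub>G\<^esub> a \<otimes>\<^bsub>G\<^esub> inv\<^bsub>G\<^esub> h) \<in> C"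
          using a c' ch(2) unfolding N_def by blast
        then show "c \<otimes>\<^bsub>G\<^esub> (h \<otimes>\<^bsub>G\<^esub> inv\<^bsub>G\<^esub> a \<otimes>\<^bsub>G\<^esub> inv\<^bsub>G\<^esub> h) \<in> C \<longleftrightarrow> c \<in> C"
          using alg_A[OF ch ac] by simp
      qed (use ac in simp)
    next
      fix a b' assume a: "a \<in> N" and b': "b' \<in> N"
      have ac: "a \<in> carrier G" using a unfolding N_def by blast
      have bc': "b' \<in> carrier G" using b' unfolding N_def by blast
      show "a \<otimes>\<^bsub>G\<^esub> b' \<in> N" unfolding N_def
      proof (intro CollectI conjI ballI)
        fix c h assume ch: "c \<in> carrier G" "h \<in> carrier G"
        have c': "c \<otimes>\<^bsub>G\<^esub> (h \<otimes>\<^bsub>G\<^esub> a \<otimes>\<^bsub>G\<^esub> inv\<^bsub>G\<^esub> h) \<in> carrier G" using ch ac by simp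
        have "(c \<otimes>\<^bsub>G\<^esub> (h \<otimes>\<^bsub>G\<^esub> a \<otimes>\<^bsub>G\<^esub> inv\<^bsub>G\<^esub> h)) \<otimes>\<^bsub>G\<^esub> (h \<otimes>\<^bsub>G\<^esub> b' \<otimes>\<^bsub>G\<^esub> inv\<^bsub>G\<^esub> h) \<in> C \<longleftrightarrow> c \<otimes>\<^bsub>G\<^esub> (h \<otimes>\<^bsub>G\<^esub> a \<otimes>\<^bsub>G\<^esub> inv\<^bsub>G\<^esub> h) \<in> C"
          using b' c' ch(2) unfolding N_def by blast
        moreover have "c \<otimes>\<^bsub>G\<^esub> (h \<otimes>\<^bsub>G\<^esub> a \<otimes>\<^bsub>G\<^esub> inv\<^bsub>G\<^esub> h) \<in> C \<longleftrightarrow> c \<in> C"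
          using a ch unfolding N_def by blast
        ultimately show "c \<otimes>\<^bsub>G\<^esub> (h \<otimes>\<^bsub>G\<^esub> (a \<otimes>\<^bsub>G\<^esub> b') \<otimes>\<^bsub>G\<^esub> inv\<^bsub>G\<^esub> h) \<in> C \<longleftrightarrow> c \<in> C"
          using alg_B[OF ch ac bc'] by simp
      qed (use ac bc' in simp)
    qed
    have Nn: "normal N G"
      unfolding normal_inv_iff
    proof (intro conjI ballI Nsg)
      fix a n assume a: "a \<in> carrier G" and n: "n \<in> N"
      have nc: "n \<in> carrier G" using n unfolding N_def by blast
      show "a \<otimes>\<^bsub>G\<^esub> n \<otimes>\<^bsub>G\<^esub> inv\<^bsub>G\<^esub> a \<in> N" unfolding N_def
      proof (intro CollectI conjI ballI)
        fix c h assume ch: "c \<in> carrier G" "h \<in> carrier G"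
        have ha: "h \<otimes>\<^bsub>G\<^esub> a \<in> carrier G" using ch a by simp
        have "c \<otimes>\<^bsub>G\<^esub> ((h \<otimes>\<^bsub>G\<^esub> a) \<otimes>\<^bsub>G\<^esub> n \<otimes>\<^bsub>G\<^esub> inv\<^bsub>G\<^esub> (h \<otimes>\<^bsub>G\<^esub> a)) \<in> C \<longleftrightarrow> c \<in> C"
          using n ch(1) ha unfolding N_def by blast
        then show "c \<otimes>\<^bsub>G\<^esub> (h \<otimes>\<^bsub>G\<^esub> (a \<otimes>\<^bsub>G\<^esub> n \<otimes>\<^bsub>G\<^esub> inv\<^bsub>G\<^esub> a) \<otimes>\<^bsub>G\<^esub> inv\<^bsub>G\<^esub> h) \<in> C \<longleftrightarrow> c \<in> C"
          using alg_C[OF a ch(2) nc] by simp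
      qed (use a nc in simp)
    qed
    have No: "openin T N"
      unfolding openin_subopen[of T N]
    proof
      fix x assume x: "x \<in> N"
      have xc: "x \<in> carrier G" using x unfolding N_def by blast
      define Onb where "Onb = {y \<in> topspace T. inv\<^bsub>G\<^esub> x \<otimes>\<^bsub>G\<^esub> y \<in> V}"
      have cx: "continuous_map T T (\<lambda>y. inv\<^bsub>G\<^esub> x \<otimes>\<^bsub>G\<^esub> y)"
        by (rule tg_mult_cont[OF assms(1) _ cid]) (simp add: top xc)
      have "openin T Onb" unfolding Onb_def by (rule openin_continuous_map_preimage[OF cx tb(1)])
      moreover have "x \<in> Onb" unfolding Onb_def using xc tb(3) top by simp
      moreover have "Onb \<subseteq> N"
      proof
        fix y assume y: "y \<in> Onb"
        then have yc: "y \<in> carrier G" and yv: "inv\<^bsub>G\<^esub> x \<otimes>\<^bsub>G\<^esub> y \<in> N" unfolding Onb_def using top VN by auto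
        have "x \<otimes>\<^bsub>G\<^esub> (inv\<^bsub>G\<^esub> x \<otimes>\<^bsub>G\<^esub> y) \<in> N" by (rule subgroup.m_closed[OF Nsg x yv])
        then show "y \<in> N" using alg_E[OF xc yc] by simp
      qed
      ultimately show "\<exists>Onb. openin T Onb \<and> x \<in> Onb \<and> Onb \<subseteq> N" by blast
    qed
    have NC: "N \<subseteq> C"
    proof
      fix x assume x: "x \<in> N"
      have xc: "x \<in> carrier G" using x unfolding N_def by blast
      have "\<one>\<^bsub>G\<^esub> \<otimes>\<^bsub>G\<^esub> (\<one>\<^bsub>G\<^esub> \<otimes>\<^bsub>G\<^esub> x \<otimes>\<^bsub>G\<^esub> inv\<^bsub>G\<^esub> \<one>\<^bsub>G\<^esub>) \<in> C \<longleftrightarrow> \<one>\<^bsub>G\<^esub> \<in> C" using x unfolding N_def by blast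
      then show "x \<in> C" using C(3) xc by simp
    qed
    have fin: "engel_comm G (n \<otimes>\<^bsub>G\<^esub> b) i g = s j" if "n \<in> N" for n
    proof -
      have "n \<in> W" using that NC C(4) by blast
      then have "n \<otimes>\<^bsub>G\<^esub> b \<in> U" unfolding W_def by blast
      then show ?thesis by (rule Us)
    qed
    show ?thesis
      apply (rule exI[where x=i], rule exI[where x=j], rule exI[where x=N], rule exI[where x=b])
      using ij Nn No bc fin by auto
  qed
  show ?thesis using part1 part2 by blast
qed
end
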